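(* Let $2\le k\le d$, let $P\subset\mathbb{R}^d$ be finite with properties $a_1,\dots,a_k\colon P\to\{-1,1\}$, and for $i=2,\dots,k$ let $H_i$ be a hyperplane strictly separating $P^i_-$ from $P^i_+$, with normal $v_i$, where $v_2,\dots,v_k$ are linearly independent. Assume that any at most $d+1$ points of $P$ are affinely independent and that the orthogonal projections onto $\mathrm{span}(v_2,\dots,v_k)$ of any at most $k$ points of $P$ are affinely independent. If there exists an orthonormal system $w_1,\dots,w_r$ (any $r\ge 0$) of vectors orthogonal to all of $v_2,\dots,v_k$ such that $P'_-$ and $P'_+$ are not $(1,\infty)$-separable, where $p'=p-\sum_{j=1}^r(p\cdot w_j)w_j$, then such a system exists with $r\le\min(k,\,d-k+1)$.
   Context: $P^i_{\pm}=\{p\in P: a_i(p)=\pm1\}$, $P_\pm=P^1_\pm$, and $X'$ denotes the image of $X$ under the stated projection. Finite sets $X,Y$ are $(1,\infty)$-separable if $\mathrm{CH}(X)\cap Y=\emptyset$ or $X\cap\mathrm{CH}(Y)=\emptyset$, where $\mathrm{CH}$ denotes the convex hull. *)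

theory Defs
  imports "HOL-Analysis.Analysis"
begin

definition orth_proj :: "'a::euclidean_space set \<Rightarrow> 'a \<Rightarrow> 'a" where
  "orth_proj V x = (THE y. y \<in> V \<and> (\<forall>z\<in>V. inner (x - y) z = 0))"

definition sep_1_inf :: "'a::euclidean_space set \<Rightarrow> 'a set \<Rightarrow> bool" where
  "sep_1_inf X Y \<longleftrightarrow> convex hull X \<inter> Y = {} \<or> X \<inter> convex hull Y = {}"

definition strictly_separates :: "'a::euclidean_space \<Rightarrow> real \<Rightarrow> 'a set \<Rightarrow> 'a set \<Rightarrow> bool" where
  "strictly_separates v b A B \<longleftrightarrow>
     ((\<forall>x\<in>A. inner v x < b) \<and> (\<forall>x\<in>B. inner v x > b)) \<or>
     ((\<forall>x\<in>A. inner v x > b) \<and> (\<forall>x\<in>B. inner v x < b))"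

definition Pcls :: "'a set \<Rightarrow> (nat \<Rightarrow> 'a \<Rightarrow> int) \<Rightarrow> nat \<Rightarrow> int \<Rightarrow> 'a set" where
  "Pcls P a i s = {p \<in> P. a i p = s}"

definition good_system :: "nat \<Rightarrow> (nat \<Rightarrow> 'a::euclidean_space) \<Rightarrow> nat \<Rightarrow> (nat \<Rightarrow> 'a) \<Rightarrow> bool" where
  "good_system k v r w \<longleftrightarrow>
     (\<forall>j\<in>{1..r}. norm (w j) = 1) \<and>
     (\<forall>i\<in>{1..r}. \<forall>j\<in>{1..r}. i \<noteq> j \<longrightarrow> inner (w i) (w j) = 0) \<and>
     (\<forall>j\<in>{1..r}. \<forall>i\<in>{2..k}. inner (w j) (v i) = 0)"

definition proj_off :: "nat \<Rightarrow> (nat \<Rightarrow> 'a::euclidean_space) \<Rightarrow> 'a \<Rightarrow> 'a" where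
  "proj_off r w p = p - (\<Sum>j=1..r. inner p (w j) *\<^sub>R w j)"

end

theory Submission
  imports Defs
begin

lemma proj_off_linear: "linear (proj_off r w)"
  unfolding proj_off_def
  by (rule linearI)
     (auto simp: inner_add_left scaleR_add_left sum.distrib scaleR_sum_right algebra_simps)

lemma proj_off_orth:
  assumes "\<forall>j\<in>{1..r}. norm (w j) = 1"
    and "\<forall>i\<in>{1..r}. \<forall>j\<in>{1..r}. i \<noteq> j \<longrightarrow> inner (w i) (w j) = 0"
    and "i \<in> {1..r}"
  shows "inner (proj_off r w p) (w i) = 0"
proof -
  have "inner (\<Sum>j=1..r. inner p (w j) *\<^sub>R w j) (w i)
        = (\<Sum>j=1..r. if j = i then inner p (w i) else 0)"
    unfolding inner_sum_left
  proof (rule sum.cong)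
    fix j assume j: "j \<in> {1..r}"
    show "inner (inner p (w j) *\<^sub>R w j) (w i) = (if j = i then inner p (w i) else 0)"
      using assms j by (auto simp: inner_commute dot_square_norm)
  qed simp
  also have "\<dots> = inner p (w i)" using assms(3) by simp
  finally show ?thesis unfolding proj_off_def by (simp add: inner_diff_left)
qed

lemma proj_off_zero:
  assumes "\<forall>j\<in>{1..r}. norm (w j) = 1"
    and "\<forall>i\<in>{1..r}. \<forall>j\<in>{1..r}. i \<noteq> j \<longrightarrow> inner (w i) (w j) = 0"
    and "z \<in> span (w ` {1..r})"
  shows "proj_off r w z = 0"
proof -
  let ?d = "proj_off r w z"
  have "?d \<in> span (w ` {1..r})"
    unfolding proj_off_def
    by (intro span_diff assms(3) span_sum span_scale span_base) auto
  moreover have "\<And>y. y \<in> w ` {1..r} \<Longrightarrow> orthogonal ?d y"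
    using proj_off_orth[OF assms(1,2)] by (auto simp: orthogonal_def)
  ultimately have "orthogonal ?d ?d" by (rule orthogonal_to_span)
  then show ?thesis by (simp add: orthogonal_def)
qed

theorem mainTheorem9:
  fixes P :: "'a::euclidean_space set"
    and k :: nat
    and a :: "nat \<Rightarrow> 'a \<Rightarrow> int"
    and v :: "nat \<Rightarrow> 'a"
    and b :: "nat \<Rightarrow> real"
  assumes "2 \<le> k" and "k \<le> DIM('a)"
    and "finite P"
    and "\<forall>i\<in>{1..k}. \<forall>p\<in>P. a i p = -1 \<or> a i p = 1"
    and "\<forall>i\<in>{2..k}. strictly_separates (v i) (b i) (Pcls P a i (-1)) (Pcls P a i 1)"
    and "inj_on v {2..k}" and "independent (v ` {2..k})"
    and "\<forall>S\<subseteq>P. card S \<le> DIM('a) + 1 \<longrightarrow> \<not> affine_dependent S"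
    and "\<forall>S\<subseteq>P. card S \<le> k \<longrightarrow>
           inj_on (orth_proj (span (v ` {2..k}))) S \<and>
           \<not> affine_dependent (orth_proj (span (v ` {2..k})) ` S)"
    and "\<exists>r w. good_system k v r w \<and>
           \<not> sep_1_inf (proj_off r w ` Pcls P a 1 (-1)) (proj_off r w ` Pcls P a 1 1)"
  shows "\<exists>r w. good_system k v r w \<and> r \<le> min k (DIM('a) - k + 1) \<and>
           \<not> sep_1_inf (proj_off r w ` Pcls P a 1 (-1)) (proj_off r w ` Pcls P a 1 1)"
proof -
  define X where "X = Pcls P a 1 (-1)"
  define Y where "Y = Pcls P a 1 1"
  obtain r0 w0 where g0: "good_system k v r0 w0"
    and ns0: "\<not> sep_1_inf (proj_off r0 w0 ` X) (proj_off r0 w0 ` Y)"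
    using assms(10) unfolding X_def Y_def by blast
  let ?f0 = "proj_off r0 w0"
  have lin0: "linear ?f0" by (rule proj_off_linear)
  from ns0 obtain y c1 where y: "y \<in> Y" and c1: "c1 \<in> convex hull X" and e1: "?f0 y = ?f0 c1"
    unfolding sep_1_inf_def convex_hull_linear_image[OF lin0, symmetric] by (auto simp: disjoint_iff)
  from ns0 obtain x c2 where x: "x \<in> X" and c2: "c2 \<in> convex hull Y" and e2: "?f0 x = ?f0 c2"
    unfolding sep_1_inf_def convex_hull_linear_image[OF lin0, symmetric] by (auto simp: disjoint_iff)
  define u1 where "u1 = y - c1"
  define u2 where "u2 = x - c2"
  have fu: "?f0 u = 0 \<Longrightarrow> u \<bullet> v i = 0" if "i \<in> {2..k}" for u i
  proof -
    assume "?f0 u = 0"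
    then have "u = (\<Sum>j=1..r0. inner u (w0 j) *\<^sub>R w0 j)" by (simp add: proj_off_def)
    then have "u \<bullet> v i = (\<Sum>j=1..r0. inner u (w0 j) * (w0 j \<bullet> v i))"
      by (metis (no_types, lifting) inner_scaleR_left inner_sum_left sum.cong)
    also have "\<dots> = 0" using g0 that unfolding good_system_def by simp
    finally show ?thesis .
  qed
  have u1o: "u1 \<bullet> v i = 0" and u2o: "u2 \<bullet> v i = 0" if "i \<in> {2..k}" for i
    using fu[OF that] e1 e2 linear_diff[OF lin0] unfolding u1_def u2_def by auto
  define A where "A = {u1, u2}"
  define V where "V = v ` {2..k}"
  have orthAV: "\<And>p q. p \<in> A \<Longrightarrow> q \<in> V \<Longrightarrow> p \<bullet> q = 0"
    using u1o u2o unfolding A_def V_def by auto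
  have "dim (A \<union> V) = dim A + dim V" by (rule dim_orthogonal_sum[OF orthAV])
  moreover have "dim (A \<union> V) \<le> DIM('a)" by (rule dim_subset_UNIV)
  moreover have "dim V = k - 1"
    using dim_eq_card_independent[OF assms(7)] card_image[OF assms(6)]
    unfolding V_def by simp
  ultimately have dA1: "dim A \<le> DIM('a) - k + 1" using assms(1) by linarith
  have dA2: "dim A \<le> 2"
  proof -
    have "card {u1, u2} \<le> 2" by (simp add: card_insert_if)
    moreover have "dim A \<le> card A" using dim_le_card[of A A] unfolding A_def by (simp add: span_superset)
    ultimately show ?thesis unfolding A_def by linarith
  qed
  have sub: "subspace (span A)" by simp
  obtain B where B: "B \<subseteq> span A" "pairwise orthogonal B" "\<And>z. z \<in> B \<Longrightarrow> norm z = 1"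
    "independent B" "card B = dim (span A)" "span B = span A"
    using orthonormal_basis_subspace[OF sub] by metis
  have finB: "finite B" using B(4) by (rule finiteI_independent)
  define m where "m = card B"
  have mle: "m \<le> min k (DIM('a) - k + 1)"
    using dA1 dA2 assms(1) B(5) unfolding m_def by simp
  obtain w where bw: "bij_betw w {1..m} B"
    using ex_bij_betw_nat_finite_1[OF finB] unfolding m_def by blast
  have wimg: "w ` {1..m} = B" using bw by (simp add: bij_betw_def)
  have winj: "inj_on w {1..m}" using bw by (simp add: bij_betw_def)
  have n1: "\<forall>j\<in>{1..m}. norm (w j) = 1" using B(3) wimg by auto
  have n2: "\<forall>i\<in>{1..m}. \<forall>j\<in>{1..m}. i \<noteq> j \<longrightarrow> inner (w i) (w j) = 0"
  proof (intro ballI impI)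
    fix i j assume ij: "i \<in> {1..m}" "j \<in> {1..m}" "i \<noteq> j"
    then have "w i \<noteq> w j" using winj by (auto dest: inj_onD)
    moreover have "w i \<in> B" "w j \<in> B" using ij wimg by auto
    ultimately show "inner (w i) (w j) = 0" using B(2) by (auto simp: pairwise_def orthogonal_def)
  qed
  have n3: "\<forall>j\<in>{1..m}. \<forall>i\<in>{2..k}. inner (w j) (v i) = 0"
  proof (intro ballI)
    fix j i assume j: "j \<in> {1..m}" and i: "i \<in> {2..k}"
    have "w j \<in> span A" using j wimg B(1) by auto
    moreover have "\<And>q. q \<in> A \<Longrightarrow> orthogonal (v i) q"
      using orthAV i unfolding V_def orthogonal_def by (auto simp: inner_commute)
    ultimately have "orthogonal (v i) (w j)" by (rule orthogonal_to_span)
    then show "inner (w j) (v i) = 0" by (simp add: orthogonal_def inner_commute)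
  qed
  have gs: "good_system k v m w" unfolding good_system_def using n1 n2 n3 by blast
  let ?f = "proj_off m w"
  have lin: "linear ?f" by (rule proj_off_linear)
  have zA: "?f z = 0" if "z \<in> span A" for z
    using proj_off_zero[OF n1 n2] that wimg B(6) by simp
  have "?f u1 = 0" "?f u2 = 0" using zA by (auto simp: A_def span_base)
  then have fe1: "?f y = ?f c1" and fe2: "?f x = ?f c2"
    unfolding u1_def u2_def linear_diff[OF lin] by auto
  have "?f y \<in> convex hull (?f ` X) \<inter> ?f ` Y"
    using fe1 c1 y unfolding convex_hull_linear_image[OF lin, symmetric] by (metis IntI imageI)
  moreover have "?f x \<in> ?f ` X \<inter> convex hull (?f ` Y)"
    using fe2 c2 x unfolding convex_hull_linear_image[OF lin, symmetric] by (metis IntI imageI)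
  ultimately have "\<not> sep_1_inf (?f ` X) (?f ` Y)" unfolding sep_1_inf_def by blast
  then show ?thesis using gs mle unfolding X_def Y_def by blast
qed

end
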